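(* Let $t\ge 1$ be an integer and $n=2(t+1)^2$. For each $0\le i\le t$, let $\mathcal{C}_i\subseteq\mathbb{Z}_n^2$ be the linear code generated by the rows of \[ G_i=\begin{bmatrix} t+1+i & t+1-i\\ i & 2(t+1)-i\end{bmatrix}. \] Then every translate $\mathbf{x}+\mathcal{C}_i$ ($\mathbf{x}\in\mathbb{Z}_n^2$) is a $(2t+1)$-diameter perfect code with minimum distance $2t+2$ and anticode $\mathcal{A}_{2t+1}$.
   Context: $\mathbb{Z}_n$ is the ring of integers modulo $n$. A code of length $m$ is a subset of $\mathbb{Z}_n^m$; it is linear if it is a submodule, and the code generated by a matrix is the submodule spanned by its rows. The Lee weight of $\mathbf{u}=(u_1,\dots,u_m)\in\mathbb{Z}_n^m$ is $\mathrm{wt}_L(\mathbf{u})=\sum_i\min\{u_i,n-u_i\}$ (with $u_i$ represented in $\{0,\dots,n-1\}$), and the Lee distance is $d_L(\mathbf{u},\mathbf{v})=\mathrm{wt}_L(\mathbf{u}-\mathbf{v})$; all distances are Lee distances. The minimum distance of a code is the minimum Lee distance between distinct codewords. A translate of $\mathcal{C}$ by $\mathbf{x}$ is $\mathbf{x}+\mathcal{C}=\{\mathbf{x}+\mathbf{c}:\mathbf{c}\in\mathcal{C}\}$. An anticode of diameter $D$ is a subset in which the maximum distance between two elements is $D$. For an adjacent pair $\{p_1,p_2\}$ of points (Lee distance $1$) and $2t+1\le n$, $\mathcal{A}_{2t+1}$ denotes the set of all points at distance at most $t$ from $\{p_1,p_2\}$ (i.e. from $p_1$ or from $p_2$); $\{p_1,p_2\}$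 is its core. Code–anticode bound: if $\mathcal{C}$ has minimum distance $d$ and $\mathcal{A}$ is an anticode of diameter $D=d-1$, then $|\mathcal{C}|\cdot|\mathcal{A}|\le|\mathbb{Z}_n^m|$; a code attaining equality (with $\mathcal{A}$ an anticode of maximum size for diameter $D$) is called a $D$-diameter perfect code (with anticode $\mathcal{A}$). *)

theory Defs
  imports Main
begin

text \<open>Vectors of Z_n^m are represented as integer lists of length m with entries
  in {0..<n}; arithmetic is componentwise modulo n.\<close>

definition Zn_space :: "nat \<Rightarrow> nat \<Rightarrow> int list set" where
  "Zn_space n m = {v. length v = m \<and> set v \<subseteq> {0..<int n}}"

definition lee_wt :: "nat \<Rightarrow> int list \<Rightarrow> nat" where
  "lee_wt n v = sum_list (map (\<lambda>a. nat (min (a mod int n) (int n - a mod int n))) v)"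

definition lee_dist :: "nat \<Rightarrow> int list \<Rightarrow> int list \<Rightarrow> nat" where
  "lee_dist n u v = lee_wt n (map2 (-) u v)"

definition vadd :: "nat \<Rightarrow> int list \<Rightarrow> int list \<Rightarrow> int list" where
  "vadd n u v = map2 (\<lambda>a b. (a + b) mod int n) u v"

definition gen_code :: "nat \<Rightarrow> nat \<Rightarrow> int list list \<Rightarrow> int list set" where
  "gen_code n m rows =
     {map (\<lambda>k. (\<Sum>j<length rows. c j * (rows ! j ! k)) mod int n) [0..<m] | c :: nat \<Rightarrow> int. True}"

definition translate :: "nat \<Rightarrow> int list \<Rightarrow> int list set \<Rightarrow> int list set" where
  "translate n x C = (\<lambda>c. vadd n x c) ` C"

definition min_dist :: "nat \<Rightarrow> int list set \<Rightarrow> nat" where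
  "min_dist n C = Min {lee_dist n u v | u v. u \<in> C \<and> v \<in> C \<and> u \<noteq> v}"

definition diam :: "nat \<Rightarrow> int list set \<Rightarrow> nat" where
  "diam n A = Max {lee_dist n u v | u v. u \<in> A \<and> v \<in> A}"

definition is_anticode :: "nat \<Rightarrow> nat \<Rightarrow> nat \<Rightarrow> int list set \<Rightarrow> bool" where
  "is_anticode n m D A \<longleftrightarrow> A \<subseteq> Zn_space n m \<and> A \<noteq> {} \<and> diam n A = D"

definition anticode_A :: "nat \<Rightarrow> nat \<Rightarrow> nat \<Rightarrow> int list \<Rightarrow> int list \<Rightarrow> int list set" where
  "anticode_A n m t p1 p2 =
     {x \<in> Zn_space n m. lee_dist n x p1 \<le> t \<or> lee_dist n x p2 \<le> t}"

definition diameter_perfect ::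
  "nat \<Rightarrow> nat \<Rightarrow> nat \<Rightarrow> int list set \<Rightarrow> int list set \<Rightarrow> bool" where
  "diameter_perfect n m D C A \<longleftrightarrow>
     C \<subseteq> Zn_space n m \<and> min_dist n C = D + 1 \<and>
     is_anticode n m D A \<and>
     (\<forall>B. is_anticode n m D B \<longrightarrow> card B \<le> card A) \<and>
     card C * card A = card (Zn_space n m)"

end

theory Submission imports Defs begin

definition lwi :: "int \<Rightarrow> int \<Rightarrow> int" where
  "lwi N a = min (a mod N) (N - a mod N)"

lemma lwi_nonneg: "N > 0 \<Longrightarrow> lwi N a \<ge> 0"
  unfolding lwi_def by (simp add: pos_mod_bound less_imp_le)

lemma lwi_cong: "a mod N = b mod N \<Longrightarrow> lwi N a = lwi N b"
  unfolding lwi_def by simp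

lemma lwi_neg: "N > 0 \<Longrightarrow> lwi N (-a) = lwi N a"
  unfolding lwi_def by (auto simp: zmod_zminus1_eq_if)

lemma lwi_le_abs: "N > 0 \<Longrightarrow> lwi N a \<le> \<bar>a\<bar>"
proof -
  assume N: "N > 0"
  have pos: "lwi N b \<le> b" if "b \<ge> 0" for b
    using that N unfolding lwi_def by (simp add: zmod_le_nonneg_dividend min_le_iff_disj)
  show ?thesis
  proof (cases "a \<ge> 0")
    case True then show ?thesis using pos[of a] by simp
  next
    case False then show ?thesis using pos[of "-a"] lwi_neg[OF N, of a] by simp
  qed
qed

lemma lwi_rep: "N > 0 \<Longrightarrow> \<exists>a'. a' mod N = a mod N \<and> \<bar>a'\<bar> = lwi N a"
proof -
  assume N: "N > 0"
  have b: "0 \<le> a mod N" "a mod N < N" using N by auto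
  show ?thesis
  proof (cases "a mod N \<le> N - a mod N")
    case True
    then show ?thesis using b by (intro exI[of _ "a mod N"]) (simp add: lwi_def)
  next
    case False
    then show ?thesis using b by (intro exI[of _ "a mod N - N"]) (simp add: lwi_def)
  qed
qed

lemma lwi_small: "N > 0 \<Longrightarrow> 2*\<bar>a\<bar> \<le> N \<Longrightarrow> lwi N a = \<bar>a\<bar>"
proof -
  assume N: "N > 0" and h: "2*\<bar>a\<bar> \<le> N"
  have pos: "lwi N b = b" if "b \<ge> 0" "2*b \<le> N" for b
  proof -
    have "b mod N = b" using that N by simp
    then show ?thesis using that unfolding lwi_def by simp
  qed
  show ?thesis
  proof (cases "a \<ge> 0")
    case True then show ?thesis using pos[of a] h by simp
  next
    case False then show ?thesis using pos[of "-a"] h lwi_neg[OF N, of a] by simp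
  qed
qed

lemma lwi_tri: "N > 0 \<Longrightarrow> lwi N (a + b) \<le> lwi N a + lwi N b"
proof -
  assume N: "N > 0"
  obtain a' where a': "a' mod N = a mod N" "\<bar>a'\<bar> = lwi N a" using lwi_rep[OF N] by blast
  obtain b' where b': "b' mod N = b mod N" "\<bar>b'\<bar> = lwi N b" using lwi_rep[OF N] by blast
  have "(a' + b') mod N = (a + b) mod N" using a'(1) b'(1) by (metis mod_add_cong)
  then have "lwi N (a+b) = lwi N (a'+b')" by (metis lwi_cong)
  also have "\<dots> \<le> \<bar>a'+b'\<bar>" by (rule lwi_le_abs[OF N])
  also have "\<dots> \<le> \<bar>a'\<bar> + \<bar>b'\<bar>" by (rule abs_triangle_ineq)
  finally show ?thesis using a' b' by simp
qed

lemma lwi_zero: "N > 0 \<Longrightarrow> \<bar>a\<bar> < N \<Longrightarrow> lwi N a = 0 \<Longrightarrow> a = 0"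
proof -
  assume N: "N > 0" and h: "\<bar>a\<bar> < N" "lwi N a = 0"
  have "a mod N = 0" using h(2) N unfolding lwi_def
    by (smt (verit) pos_mod_bound)
  then have "N dvd a" by auto
  then show ?thesis using h(1) by (metis dvd_imp_le_int abs_of_pos N not_less)
qed

lemma space_pair: "[a,b] \<in> Zn_space n 2 \<longleftrightarrow> 0 \<le> a \<and> a < int n \<and> 0 \<le> b \<and> b < int n"
  by (auto simp: Zn_space_def)

lemma space_mem: "v \<in> Zn_space n 2 \<Longrightarrow> \<exists>a b. v = [a,b]"
  by (auto simp: Zn_space_def numeral_2_eq_2 length_Suc_conv)

lemma dist_pair: "n > 0 \<Longrightarrow> int (lee_dist n [a,b] [c,d]) = lwi (int n) (a - c) + lwi (int n) (b - d)"
  using lwi_nonneg[of "int n" "a - c"] lwi_nonneg[of "int n" "b - d"]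
  by (simp add: lee_dist_def lee_wt_def lwi_def)

lemma space_eq: "Zn_space n 2 = (\<lambda>(a,b). [a,b]) ` ({0..<int n} \<times> {0..<int n})"
  by (auto simp: Zn_space_def numeral_2_eq_2 length_Suc_conv image_iff)

lemma card_space: "card (Zn_space n 2) = n * n"
proof -
  have "inj_on (\<lambda>(a,b). [a::int,b]) ({0..<int n} \<times> {0..<int n})" by (auto simp: inj_on_def)
  then show ?thesis unfolding space_eq by (simp add: card_image card_cartesian_product)
qed

lemma finite_space: "finite (Zn_space n 2)"
  unfolding space_eq by simp

lemma W_char: "translate n [x0,x1] (gen_code n 2 [[a,b],[c,d]]) =
   {[(x0 + u*a + v*c) mod int n, (x1 + u*b + v*d) mod int n] | u v. True}"
proof -
  have "translate n [x0,x1] (gen_code n 2 [[a,b],[c,d]]) =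
   {[(x0 + ((cc 0*a + cc 1*c) mod int n)) mod int n, (x1 + ((cc 0*b + cc 1*d) mod int n)) mod int n] | cc :: nat \<Rightarrow> int. True}"
    unfolding translate_def gen_code_def vadd_def
    apply (auto simp: numeral_2_eq_2 upt_rec image_iff)
    subgoal for cc by (rule exI[of _ "[(cc 0 * a + cc (Suc 0) * c) mod int n, (cc 0 * b + cc (Suc 0) * d) mod int n]"]) auto
    done
  also have "\<dots> = {[(x0 + u*a + v*c) mod int n, (x1 + u*b + v*d) mod int n] | u v. True}"
  proof (auto simp: mod_add_right_eq add.assoc)
    fix u v
    show "\<exists>cc. (x0 + (u * a + v * c)) mod int n = (x0 + (cc 0 * a + cc (Suc 0) * c)) mod int n \<and>
            (x1 + (u * b + v * d)) mod int n = (x1 + (cc 0 * b + cc (Suc 0) * d)) mod int n"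
      by (rule exI[of _ "\<lambda>j. if j = 0 then u else v"]) simp
  qed
  finally show ?thesis .
qed


lemma dvd_small_zero: "(N::int) dvd z \<Longrightarrow> \<bar>z\<bar> < N \<Longrightarrow> z = 0"
proof (rule ccontr)
  assume "N dvd z" "\<bar>z\<bar> < N" "z \<noteq> 0"
  then have "\<bar>N\<bar> \<le> \<bar>z\<bar>" using dvd_imp_le_int by blast
  then show False using \<open>\<bar>z\<bar> < N\<close> by simp
qed

lemma dvd_mod_diff: "(N::int) dvd (X mod N - X)"
  by (metis mod_eq_dvd_iff mod_mod_trivial)

lemma lwi_dvd: "(N::int) dvd (X - Z) \<Longrightarrow> lwi N X = lwi N Z"
  by (metis lwi_cong mod_eq_dvd_iff)

lemma code_lower:
  fixes s ii e0 e1 u v N :: int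
  assumes s: "s > 0" and N: "N = 2*s*s"
  and h0: "N dvd (e0 - (u*(s+ii) + v*ii))" and h1: "N dvd (e1 - (u*(s-ii) + v*(2*s-ii)))"
  and nz: "e0 \<noteq> 0 \<or> e1 \<noteq> 0"
  shows "\<bar>e0\<bar> + \<bar>e1\<bar> \<ge> 2*s"
proof -
  define K where "K = u + v"
  have eq: "(e0 + e1) - 2*s*K = (e0 - (u*(s+ii) + v*ii)) + (e1 - (u*(s-ii) + v*(2*s-ii)))"
    unfolding K_def by (simp add: algebra_simps)
  have NK: "N dvd (e0 + e1) - 2*s*K" unfolding eq using h0 h1 by (rule dvd_add)
  have sN: "2*s dvd N" unfolding N by simp
  have "2*s dvd (e0 + e1) - 2*s*K" using sN NK by (rule dvd_trans)
  then have d2: "2*s dvd e0 + e1" by (metis dvd_diff_commute dvd_add_right_iff dvd_triv_left diff_add_cancel)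
  show ?thesis
  proof (cases "e0 + e1 = 0")
    case False
    have "2*s \<le> \<bar>e0 + e1\<bar>" using dvd_imp_le_int[OF False d2] s by simp
    then show ?thesis by simp
  next
    case True
    then have "N dvd -(2*s*K)" using NK by simp
    then have "(2*s)*s dvd (2*s)*K" unfolding N by simp
    then have sK: "s dvd K" using s by (subst (asm) dvd_mult_cancel_left) auto
    have "u*(s+ii) + v*ii = s*u + K*ii" unfolding K_def by (simp add: algebra_simps)
    then have "s dvd (u*(s+ii) + v*ii)" using sK by simp
    moreover have "s dvd e0 - (u*(s+ii) + v*ii)" using h0 unfolding N
      by (metis dvd_mult_right)
    ultimately have "s dvd e0" by (metis diff_add_cancel dvd_add)
    moreover have "e0 \<noteq> 0" using True nz by auto
    ultimately have "\<bar>s\<bar> \<le> \<bar>e0\<bar>" using dvd_imp_le_int by blast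
    then have "s \<le> \<bar>e0\<bar>" using s by simp
    moreover have "\<bar>e1\<bar> = \<bar>e0\<bar>" using True by (simp add: eq_neg_iff_add_eq_0[symmetric])
    ultimately show ?thesis by simp
  qed
qed

lemma code_inj:
  fixes s ii du dv N :: int
  assumes s: "s > 0" and N: "N = 2*s*s"
  and h0: "N dvd (du*s + dv*ii)" and h1: "N dvd (-du*s + dv*(2*s - ii))"
  and b: "\<bar>du\<bar> < 2*s" "\<bar>dv\<bar> < s"
  shows "du = 0 \<and> dv = 0"
proof -
  have "(du*s + dv*ii) + (-du*s + dv*(2*s - ii)) = (2*s)*dv" by (simp add: algebra_simps)
  then have "N dvd (2*s)*dv" using dvd_add[OF h0 h1] by simp
  then have "(2*s)*s dvd (2*s)*dv" unfolding N by simp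
  then have "s dvd dv" using s by (subst (asm) dvd_mult_cancel_left) auto
  then have dv: "dv = 0" using b(2) dvd_small_zero by auto
  then have "(2*s)*s dvd du*s" using h0 unfolding N by simp
  then have "2*s dvd du" using s by (metis mult.commute dvd_mult_cancel_left less_irrefl)
  then have "du = 0" using b(1) dvd_small_zero by auto
  with dv show ?thesis by simp
qed

lemma rot_norm: "\<bar>e0\<bar> + \<bar>e1\<bar> = (1::int) \<Longrightarrow> \<bar>a*e0 - b*e1\<bar> + \<bar>a*e1 + b*e0\<bar> = \<bar>a\<bar> + \<bar>b\<bar>"
  by (cases "e0 = 0"; cases "e0 = 1"; cases "e0 = -1") (auto simp: abs_if split: if_splits)

lemma rot_inj: "\<bar>e0\<bar> + \<bar>e1\<bar> = (1::int) \<Longrightarrow> N dvd (a*e0 - b*e1) \<Longrightarrow> N dvd (a*e1 + b*e0)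
   \<Longrightarrow> N dvd a \<and> N dvd b"
  by (cases "e0 = 0"; cases "e0 = 1"; cases "e0 = -1") (auto simp: abs_if split: if_splits)

lemma code_anticode:
  assumes n: "n > 0" and W: "W \<subseteq> Zn_space n 2" and B: "B \<subseteq> Zn_space n 2"
  and dW: "\<forall>u\<in>W. \<forall>v\<in>W. u \<noteq> v \<longrightarrow> lee_dist n u v > D"
  and dB: "\<forall>u\<in>B. \<forall>v\<in>B. lee_dist n u v \<le> D"
  shows "card W * card B \<le> n * n"
proof -
  define N where "N = int n"
  have Np: "N > 0" using n N_def by simp
  define h where "h = (\<lambda>(w::int list, b::int list). [(w!0 + b!0) mod N, (w!1 + b!1) mod N])"
  have inj: "inj_on h (W \<times> B)"
  proof (rule inj_onI, clarify)
    fix w b w' b'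
    assume hw: "w \<in> W" "b \<in> B" "w' \<in> W" "b' \<in> B" and eq: "h (w, b) = h (w', b')"
    obtain w0 w1 where w: "w = [w0,w1]" "0 \<le> w0" "w0 < N" "0 \<le> w1" "w1 < N"
      using hw(1) W space_mem space_pair N_def by blast
    obtain b0 b1 where bb: "b = [b0,b1]" "0 \<le> b0" "b0 < N" "0 \<le> b1" "b1 < N"
      using hw(2) B space_mem space_pair N_def by blast
    obtain w0' w1' where w': "w' = [w0',w1']" "0 \<le> w0'" "w0' < N" "0 \<le> w1'" "w1' < N"
      using hw(3) W space_mem space_pair N_def by blast
    obtain b0' b1' where bb': "b' = [b0',b1']" "0 \<le> b0'" "b0' < N" "0 \<le> b1'" "b1' < N"
      using hw(4) B space_mem space_pair N_def by blast
    have e0: "(w0 + b0) mod N = (w0' + b0') mod N" and e1: "(w1 + b1) mod N = (w1' + b1') mod N"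
      using eq unfolding h_def w bb w' bb' by auto
    have d0: "N dvd (b0 - b0') - (w0' - w0)" using e0 unfolding mod_eq_dvd_iff
      by (simp add: algebra_simps)
    have d1: "N dvd (b1 - b1') - (w1' - w1)" using e1 unfolding mod_eq_dvd_iff
      by (simp add: algebra_simps)
    have "int (lee_dist n b b') = int (lee_dist n w' w)"
      unfolding bb bb' w w' using dist_pair[OF n] lwi_dvd[OF d0] lwi_dvd[OF d1] N_def by simp
    then have dd: "lee_dist n b b' = lee_dist n w' w" by simp
    have "w = w'"
    proof (rule ccontr)
      assume "w \<noteq> w'"
      then have "lee_dist n w' w > D" using dW hw by auto
      moreover have "lee_dist n b b' \<le> D" using dB hw by auto
      ultimately show False using dd by simp
    qed
    then have "w0 = w0'" "w1 = w1'" using w w' by auto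
    then have "N dvd b0 - b0'" "N dvd b1 - b1'" using d0 d1 by auto
    then have "b0 = b0'" "b1 = b1'" using dvd_small_zero bb bb'
      by (smt (verit))+
    then show "w = w' \<and> b = b'" using \<open>w = w'\<close> bb bb' by simp
  qed
  have img: "h ` (W \<times> B) \<subseteq> Zn_space n 2"
    unfolding h_def using Np N_def by (auto simp: Zn_space_def)
  have "card (W \<times> B) \<le> card (Zn_space n 2)"
    using card_inj_on_le[OF inj img finite_space] .
  then show ?thesis by (simp add: card_space card_cartesian_product)
qed


lemma lwi_moddiff: "lwi N (X mod N - Y mod N) = lwi N (X - Y)"
proof (rule lwi_dvd)
  have "(X mod N - Y mod N) - (X - Y) = (X mod N - X) - (Y mod N - Y)" by simp
  then show "N dvd (X mod N - Y mod N) - (X - Y)" using dvd_mod_diff[of N X] dvd_mod_diff[of N Y]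
    by (metis dvd_diff)
qed

lemma dist_mod: "n > 0 \<Longrightarrow> int (lee_dist n [X0 mod int n, X1 mod int n] [Y0 mod int n, Y1 mod int n])
   = lwi (int n) (X0 - Y0) + lwi (int n) (X1 - Y1)"
  by (simp add: dist_pair lwi_moddiff)

lemma dist_sym: "n > 0 \<Longrightarrow> u \<in> Zn_space n 2 \<Longrightarrow> v \<in> Zn_space n 2 \<Longrightarrow> lee_dist n u v = lee_dist n v u"
proof -
  assume n: "n > 0" and uv: "u \<in> Zn_space n 2" "v \<in> Zn_space n 2"
  obtain a b where u: "u = [a,b]" using uv space_mem by blast
  obtain c d where v: "v = [c,d]" using uv space_mem by blast
  have "int (lee_dist n u v) = int (lee_dist n v u)"
    unfolding u v dist_pair[OF n] using lwi_neg[of "int n" "a - c"] lwi_neg[of "int n" "b - d"] n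
    by simp
  then show ?thesis by simp
qed

lemma dist_tri: "n > 0 \<Longrightarrow> u \<in> Zn_space n 2 \<Longrightarrow> v \<in> Zn_space n 2 \<Longrightarrow> p \<in> Zn_space n 2 \<Longrightarrow>
   lee_dist n u v \<le> lee_dist n u p + lee_dist n p v"
proof -
  assume n: "n > 0" and uv: "u \<in> Zn_space n 2" "v \<in> Zn_space n 2" "p \<in> Zn_space n 2"
  obtain a b where u: "u = [a,b]" using uv space_mem by blast
  obtain c d where v: "v = [c,d]" using uv space_mem by blast
  obtain e f where p: "p = [e,f]" using uv space_mem by blast
  have N: "int n > 0" using n by simp
  have "lwi (int n) (a - c) \<le> lwi (int n) (a - e) + lwi (int n) (e - c)"
    using lwi_tri[OF N, of "a - e" "e - c"] by simp
  moreover have "lwi (int n) (b - d) \<le> lwi (int n) (b - f) + lwi (int n) (f - d)"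
    using lwi_tri[OF N, of "b - f" "f - d"] by simp
  ultimately have "int (lee_dist n u v) \<le> int (lee_dist n u p) + int (lee_dist n p v)"
    unfolding u v p dist_pair[OF n] by simp
  then show ?thesis by simp
qed

lemma dist_self: "n > 0 \<Longrightarrow> lee_dist n [a,b] [a,b] = 0"
  using dist_pair[of n a b a b] by (simp add: lwi_def)

theorem mainTheorem1:
  fixes t i n :: nat and x p1 p2 :: "int list"
  assumes "t \<ge> 1" and "n = 2 * (t + 1)^2" and "i \<le> t"
    and "x \<in> Zn_space n 2"
    and "p1 \<in> Zn_space n 2" and "p2 \<in> Zn_space n 2" and "lee_dist n p1 p2 = 1"
  shows "diameter_perfect n 2 (2 * t + 1)
           (translate n x (gen_code n 2
              [[int (t + 1 + i), int (t + 1) - int i], [int i, int (2 * (t + 1)) - int i]]))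
           (anticode_A n 2 t p1 p2)
       \<and> min_dist n (translate n x (gen_code n 2
              [[int (t + 1 + i), int (t + 1) - int i], [int i, int (2 * (t + 1)) - int i]]))
           = 2 * t + 2"
proof -
  define N where "N = int n"
  define s where "s = int t + 1"
  define ii where "ii = int i"
  have s2: "s \<ge> 2" using assms(1) s_def by simp
  have Ns: "N = 2*s*s" using assms(2) unfolding N_def s_def by (simp add: power2_eq_square algebra_simps)
  have ss: "s*s \<ge> 2*s" using s2 by (simp add: mult_right_mono)
  have Np: "N > 0" using Ns ss s2 by simp
  have n0: "n > 0" using assms(2) by simp
  have iib: "0 \<le> ii" "ii \<le> s - 1" using assms(3) ii_def s_def by auto
  obtain x0 x1 where x: "x = [x0,x1]" using assms(4) space_mem by blast
  define fW where "fW = (\<lambda>u v. [(x0 + u*(s+ii) + v*ii) mod N, (x1 + u*(s-ii) + v*(2*s-ii)) mod N])"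
  define W where "W = translate n x (gen_code n 2 [[int (t + 1 + i), int (t + 1) - int i], [int i, int (2 * (t + 1)) - int i]])"
  have W_eq: "W = {fW u v | u v. True}"
    unfolding W_def x W_char fW_def N_def s_def ii_def by (simp add: algebra_simps)
  have Wsub: "W \<subseteq> Zn_space n 2"
    unfolding W_eq fW_def using Np N_def by (auto simp: space_pair)
  have Wfin: "finite W" using Wsub finite_space finite_subset by blast
  have Wdist: "lee_dist n w w' \<ge> 2*t+2" if ww: "w \<in> W" "w' \<in> W" "w \<noteq> w'" for w w'
  proof -
    obtain u v where w: "w = fW u v" using ww W_eq by auto
    obtain u' v' where w': "w' = fW u' v'" using ww W_eq by auto
    define U0 where "U0 = x0 + u*(s+ii) + v*ii"
    define U1 where "U1 = x1 + u*(s-ii) + v*(2*s-ii)"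
    define V0 where "V0 = x0 + u'*(s+ii) + v'*ii"
    define V1 where "V1 = x1 + u'*(s-ii) + v'*(2*s-ii)"
    have wl: "w = [U0 mod N, U1 mod N]" "w' = [V0 mod N, V1 mod N]"
      unfolding w w' fW_def U0_def U1_def V0_def V1_def by auto
    obtain e0 where e0: "e0 mod N = (U0 - V0) mod N" "\<bar>e0\<bar> = lwi N (U0 - V0)" using lwi_rep[OF Np] by blast
    obtain e1 where e1: "e1 mod N = (U1 - V1) mod N" "\<bar>e1\<bar> = lwi N (U1 - V1)" using lwi_rep[OF Np] by blast
    have h0: "N dvd (e0 - ((u-u')*(s+ii) + (v-v')*ii))"
      using e0(1) unfolding mod_eq_dvd_iff U0_def V0_def by (simp add: algebra_simps)
    have h1: "N dvd (e1 - ((u-u')*(s-ii) + (v-v')*(2*s-ii)))"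
      using e1(1) unfolding mod_eq_dvd_iff U1_def V1_def by (simp add: algebra_simps)
    have nz: "e0 \<noteq> 0 \<or> e1 \<noteq> 0"
    proof (rule ccontr)
      assume "\<not> (e0 \<noteq> 0 \<or> e1 \<noteq> 0)"
      then have "e0 = 0" "e1 = 0" by auto
      then have "N dvd U0 mod N - V0 mod N" "N dvd U1 mod N - V1 mod N"
        using e0(1) e1(1) by (auto simp: dvd_eq_mod_eq_0 mod_diff_eq)
      moreover have "\<bar>U0 mod N - V0 mod N\<bar> < N" "\<bar>U1 mod N - V1 mod N\<bar> < N"
        using Np by (smt (verit) pos_mod_bound pos_mod_sign)+
      ultimately have "U0 mod N = V0 mod N" "U1 mod N = V1 mod N"
        using dvd_small_zero by (metis eq_iff_diff_eq_0)+
      then show False using ww(3) wl by simp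
    qed
    have "\<bar>e0\<bar> + \<bar>e1\<bar> \<ge> 2*s" using code_lower[OF _ Ns h0 h1 nz] s2 by simp
    moreover have "int (lee_dist n w w') = \<bar>e0\<bar> + \<bar>e1\<bar>"
      unfolding wl N_def using dist_mod[OF n0] e0(2) e1(2) N_def by simp
    ultimately show ?thesis unfolding s_def by simp
  qed
  have Wpair: "fW 0 0 \<in> W \<and> fW 0 1 \<in> W \<and> fW 0 1 \<noteq> fW 0 0 \<and> lee_dist n (fW 0 1) (fW 0 0) = 2*t+2"
  proof -
    have l1: "lwi N ii = ii" using lwi_small[OF Np, of ii] iib Ns ss by simp
    have l2: "lwi N (2*s - ii) = 2*s - ii" using lwi_small[OF Np, of "2*s - ii"] iib Ns ss by simp
    have "int (lee_dist n (fW 0 1) (fW 0 0)) = lwi N ((x0 + ii) - x0) + lwi N ((x1 + (2*s-ii)) - x1)"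
      unfolding fW_def N_def using dist_mod[OF n0] by simp
    also have "\<dots> = 2*s" using l1 l2 by simp
    finally have d: "lee_dist n (fW 0 1) (fW 0 0) = 2*t+2" unfolding s_def by simp
    moreover have "fW 0 1 \<noteq> fW 0 0"
    proof
      assume "fW 0 1 = fW 0 0"
      then have "lee_dist n (fW 0 1) (fW 0 0) = 0" unfolding fW_def using dist_self[OF n0] by simp
      then show False using d by simp
    qed
    ultimately show ?thesis unfolding W_eq by blast
  qed
  have Wcard: "card W \<ge> n"
  proof -
    define g where "g = (\<lambda>(u,v). fW u (v - u))"
    define Dm where "Dm = {0..<2*s} \<times> {0..<s}"
    have inj: "inj_on g Dm"
    proof (rule inj_onI, clarify)
      fix u v u' v'
      assume d: "(u,v) \<in> Dm" "(u',v') \<in> Dm" and eq: "g (u,v) = g (u',v')"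
      have e0: "(x0 + u * (s + ii) + (v - u) * ii) mod N = (x0 + u' * (s + ii) + (v' - u') * ii) mod N"
       and e1: "(x1 + u * (s - ii) + (v - u) * (2 * s - ii)) mod N = (x1 + u' * (s - ii) + (v' - u') * (2 * s - ii)) mod N"
        using eq unfolding g_def fW_def by auto
      have h0: "N dvd ((u-u')*s + (v-v')*ii)"
        using e0 unfolding mod_eq_dvd_iff by (simp add: algebra_simps)
      have h1: "N dvd (-(u-u')*s + (v-v')*(2*s-ii))"
        using e1 unfolding mod_eq_dvd_iff by (simp add: algebra_simps)
      have "\<bar>u - u'\<bar> < 2*s" "\<bar>v - v'\<bar> < s" using d unfolding Dm_def by auto
      then have "u - u' = 0 \<and> v - v' = 0" using code_inj[OF _ Ns h0 h1] s2 by simp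
      then show "u = u' \<and> v = v'" by simp
    qed
    have "g ` Dm \<subseteq> W" unfolding g_def W_eq by auto
    then have "card (g ` Dm) \<le> card W" using Wfin card_mono by blast
    moreover have "card (g ` Dm) = n"
    proof -
      have "nat (2*s) = 2*(t+1)" "nat s = t+1" unfolding s_def by auto
      then show ?thesis using card_image[OF inj] unfolding Dm_def
        using assms(2) by (simp add: card_cartesian_product power2_eq_square)
    qed
    ultimately show ?thesis by simp
  qed
  define A where "A = anticode_A n 2 t p1 p2"
  obtain P0 P1 where p1: "p1 = [P0,P1]" "0 \<le> P0" "P0 < N" "0 \<le> P1" "P1 < N"
    using assms(5) space_mem space_pair N_def by blast
  obtain Q0 Q1 where p2: "p2 = [Q0,Q1]" "0 \<le> Q0" "Q0 < N" "0 \<le> Q1" "Q1 < N"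
    using assms(6) space_mem space_pair N_def by blast
  have p1m: "p1 = [P0 mod N, P1 mod N]" using p1 by simp
  have p2m: "p2 = [Q0 mod N, Q1 mod N]" using p2 by simp
  obtain d0 where d0: "d0 mod N = (P0 - Q0) mod N" "\<bar>d0\<bar> = lwi N (P0 - Q0)" using lwi_rep[OF Np] by blast
  obtain d1 where d1: "d1 mod N = (P1 - Q1) mod N" "\<bar>d1\<bar> = lwi N (P1 - Q1)" using lwi_rep[OF Np] by blast
  define e0 where "e0 = - d0"
  define e1 where "e1 = - d1"
  have e01: "\<bar>e0\<bar> + \<bar>e1\<bar> = 1"
    using assms(7) dist_pair[OF n0, of P0 P1 Q0 Q1] d0 d1 p1 p2 unfolding e0_def e1_def N_def by simp
  have q0: "N dvd (Q0 - P0 - e0)" using d0(1) unfolding mod_eq_dvd_iff e0_def by (simp add: algebra_simps)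
  have q1: "N dvd (Q1 - P1 - e1)" using d1(1) unfolding mod_eq_dvd_iff e1_def by (simp add: algebra_simps)
  define yA where "yA = (\<lambda>a b. [(P0 + a*e0 - b*e1) mod N, (P1 + a*e1 + b*e0) mod N])"
  have yA_sp: "yA a b \<in> Zn_space n 2" for a b
    unfolding yA_def using Np N_def by (auto simp: space_pair)
  have yA_d1: "int (lee_dist n (yA a b) p1) \<le> \<bar>a\<bar> + \<bar>b\<bar>" for a b
  proof -
    have "int (lee_dist n (yA a b) p1) = lwi N (a*e0 - b*e1) + lwi N (a*e1 + b*e0)"
      unfolding yA_def p1m N_def using dist_mod[OF n0] by simp
    also have "\<dots> \<le> \<bar>a*e0 - b*e1\<bar> + \<bar>a*e1 + b*e0\<bar>" using lwi_le_abs[OF Np] add_mono by blast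
    finally show ?thesis using rot_norm[OF e01] by simp
  qed
  have yA_d2: "int (lee_dist n (yA a b) p2) \<le> \<bar>a - 1\<bar> + \<bar>b\<bar>" for a b
  proof -
    have "int (lee_dist n (yA a b) p2) = lwi N (P0 + a*e0 - b*e1 - Q0) + lwi N (P1 + a*e1 + b*e0 - Q1)"
      unfolding yA_def p2m N_def using dist_mod[OF n0] by simp
    also have "lwi N (P0 + a*e0 - b*e1 - Q0) = lwi N ((a-1)*e0 - b*e1)"
    proof (rule lwi_dvd)
      have "(P0 + a*e0 - b*e1 - Q0) - ((a-1)*e0 - b*e1) = -(Q0 - P0 - e0)" by (simp add: algebra_simps)
      then show "N dvd (P0 + a*e0 - b*e1 - Q0) - ((a-1)*e0 - b*e1)" using q0 by (simp only: dvd_minus_iff)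
    qed
    also have "lwi N (P1 + a*e1 + b*e0 - Q1) = lwi N ((a-1)*e1 + b*e0)"
    proof (rule lwi_dvd)
      have "(P1 + a*e1 + b*e0 - Q1) - ((a-1)*e1 + b*e0) = -(Q1 - P1 - e1)" by (simp add: algebra_simps)
      then show "N dvd (P1 + a*e1 + b*e0 - Q1) - ((a-1)*e1 + b*e0)" using q1 by (simp only: dvd_minus_iff)
    qed
    also have "lwi N ((a-1)*e0 - b*e1) + lwi N ((a-1)*e1 + b*e0) \<le> \<bar>(a-1)*e0 - b*e1\<bar> + \<bar>(a-1)*e1 + b*e0\<bar>"
      using lwi_le_abs[OF Np] add_mono by blast
    finally show ?thesis using rot_norm[OF e01, of "a - 1" b] by simp
  qed
  have yA_A: "yA a b \<in> A" if "\<bar>a\<bar> + \<bar>b\<bar> \<le> int t \<or> \<bar>a - 1\<bar> + \<bar>b\<bar> \<le> int t" for a b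
  proof -
    have "int (lee_dist n (yA a b) p1) \<le> int t \<or> int (lee_dist n (yA a b) p2) \<le> int t"
      using that yA_d1[of a b] yA_d2[of a b] by linarith
    then show ?thesis unfolding A_def anticode_A_def using yA_sp by auto
  qed
  have Asub: "A \<subseteq> Zn_space n 2" unfolding A_def anticode_A_def by auto
  have Afin: "finite A" using Asub finite_space finite_subset by blast
  have Acard: "card A \<ge> n"
  proof -
    define g where "g = (\<lambda>(q,m,r). yA (q+m+r-int t) (q-m))"
    define T where "T = {0..<s} \<times> {0..<s} \<times> {0..<(2::int)}"
    have inj: "inj_on g T"
    proof (rule inj_onI)
      fix X Y
      assume dX: "X \<in> T" and dY: "Y \<in> T" and eqXY: "g X = g Y"
      obtain q m r where X: "X = (q,m,r)" by (cases X) auto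
      obtain q' m' r' where Y: "Y = (q',m',r')" by (cases Y) auto
      have d: "(q,m,r) \<in> T" "(q',m',r') \<in> T" using dX dY X Y by auto
      have eq: "g (q,m,r) = g (q',m',r')" using eqXY X Y by simp
      define a where "a = q+m+r-int t"
      define b where "b = q - m"
      define a' where "a' = q'+m'+r'-int t"
      define b' where "b' = q' - m'"
      have e0': "(P0 + a*e0 - b*e1) mod N = (P0 + a'*e0 - b'*e1) mod N"
       and e1': "(P1 + a*e1 + b*e0) mod N = (P1 + a'*e1 + b'*e0) mod N"
        using eq unfolding g_def yA_def a_def b_def a'_def b'_def by auto
      have h0: "N dvd ((a-a')*e0 - (b-b')*e1)"
        using e0' unfolding mod_eq_dvd_iff by (simp add: algebra_simps)
      have h1: "N dvd ((a-a')*e1 + (b-b')*e0)"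
        using e1' unfolding mod_eq_dvd_iff by (simp add: algebra_simps)
      have dd: "N dvd (a - a') \<and> N dvd (b - b')" using rot_inj[OF e01 h0 h1] .
      have N4': "4*s \<le> N" using Ns ss by simp
      have N4: "4*int t + 4 \<le> N" using N4' unfolding s_def by simp
      have "\<bar>a - a'\<bar> < N" "\<bar>b - b'\<bar> < N" using d N4 unfolding T_def a_def a'_def b_def b'_def s_def
        by auto
      then have "a - a' = 0" "b - b' = 0" using dd dvd_small_zero by blast+
      then have z: "q+m+r = q'+m'+r'" "q - m = q' - m'" unfolding a_def a'_def b_def b'_def by simp_all
      have rr: "0 \<le> r" "r < 2" "0 \<le> r'" "r' < 2" using d unfolding T_def by auto
      have "q = q' \<and> m = m' \<and> r = r'" using z rr by presburger
      then show "X = Y" using X Y by simp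
    qed
    have "g ` T \<subseteq> A"
    proof clarify
      fix q m r assume "(q,m,r) \<in> T"
      then have "\<bar>q+m+r-int t\<bar> + \<bar>q-m\<bar> \<le> int t \<or> \<bar>q+m+r-int t - 1\<bar> + \<bar>q-m\<bar> \<le> int t"
        unfolding T_def s_def by auto
      then show "g (q,m,r) \<in> A" unfolding g_def using yA_A by simp
    qed
    then have "card (g ` T) \<le> card A" using Afin card_mono by blast
    moreover have "card (g ` T) = n"
    proof -
      have "nat s = t+1" unfolding s_def by auto
      then show ?thesis using card_image[OF inj] unfolding T_def
        using assms(2) by (simp add: card_cartesian_product power2_eq_square)
    qed
    ultimately show ?thesis by simp
  qed
  have Adist: "lee_dist n y z \<le> 2*t+1" if yz: "y \<in> A" "z \<in> A" for y z
  proof -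
    have ys: "y \<in> Zn_space n 2" and zs: "z \<in> Zn_space n 2" using yz Asub by auto
    have yc: "lee_dist n y p1 \<le> t \<or> lee_dist n y p2 \<le> t" and zc: "lee_dist n z p1 \<le> t \<or> lee_dist n z p2 \<le> t"
      using yz unfolding A_def anticode_A_def by auto
    have s12: "lee_dist n p2 p1 = 1" using dist_sym[OF n0 assms(5,6)] assms(7) by simp
    have T1: "lee_dist n y z \<le> lee_dist n y p1 + lee_dist n z p1"
      using dist_tri[OF n0 ys zs assms(5)] dist_sym[OF n0 assms(5) zs] by simp
    have T2: "lee_dist n y z \<le> lee_dist n y p2 + lee_dist n z p2"
      using dist_tri[OF n0 ys zs assms(6)] dist_sym[OF n0 assms(6) zs] by simp
    have T3: "lee_dist n z p1 \<le> lee_dist n z p2 + 1"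
      using dist_tri[OF n0 zs assms(5) assms(6)] s12 by simp
    have T4: "lee_dist n z p2 \<le> lee_dist n z p1 + 1"
      using dist_tri[OF n0 zs assms(6) assms(5)] assms(7) by simp
    show ?thesis using yc zc T1 T2 T3 T4 by linarith
  qed
  have Apair: "yA (- int t) 0 \<in> A \<and> yA (int t + 1) 0 \<in> A \<and> lee_dist n (yA (int t + 1) 0) (yA (- int t) 0) = 2*t+1"
  proof -
    have b: "2 * (2 * int t + 1) \<le> N" using Ns s_def by (simp add: algebra_simps)
    have ea: "\<bar>e0\<bar> \<le> 1" "\<bar>e1\<bar> \<le> 1" using e01 by auto
    have l0: "lwi N ((2*int t+1)*e0) = (2*int t+1)*\<bar>e0\<bar>"
    proof -
      have "(2*int t+1)*\<bar>e0\<bar> \<le> 2*int t+1" using ea(1) by (intro mult_left_le) auto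
      moreover have "\<bar>(2*int t+1)*e0\<bar> = (2*int t+1)*\<bar>e0\<bar>" by (simp add: abs_mult)
      ultimately have "2*\<bar>(2*int t+1)*e0\<bar> \<le> N" using b by (smt (verit))
      then show ?thesis using lwi_small[OF Np] by (simp add: abs_mult)
    qed
    have l1: "lwi N ((2*int t+1)*e1) = (2*int t+1)*\<bar>e1\<bar>"
    proof -
      have "(2*int t+1)*\<bar>e1\<bar> \<le> 2*int t+1" using ea(2) by (intro mult_left_le) auto
      moreover have "\<bar>(2*int t+1)*e1\<bar> = (2*int t+1)*\<bar>e1\<bar>" by (simp add: abs_mult)
      ultimately have "2*\<bar>(2*int t+1)*e1\<bar> \<le> N" using b by (smt (verit))
      then show ?thesis using lwi_small[OF Np] by (simp add: abs_mult)
    qed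
    have "int (lee_dist n (yA (int t + 1) 0) (yA (- int t) 0)) =
       lwi N ((P0 + (int t + 1)*e0) - (P0 + (- int t)*e0)) + lwi N ((P1 + (int t + 1)*e1) - (P1 + (- int t)*e1))"
      unfolding yA_def N_def using dist_mod[OF n0] by simp
    also have "\<dots> = lwi N ((2*int t+1)*e0) + lwi N ((2*int t+1)*e1)" by (simp add: algebra_simps)
    also have "\<dots> = (2*int t+1) * (\<bar>e0\<bar> + \<bar>e1\<bar>)" using l0 l1 by (simp add: algebra_simps)
    finally have "lee_dist n (yA (int t + 1) 0) (yA (- int t) 0) = 2*t+1" using e01 by simp
    moreover have "yA (- int t) 0 \<in> A" "yA (int t + 1) 0 \<in> A" by (rule yA_A; simp)+
    ultimately show ?thesis by simp
  qed
  have mind: "min_dist n W = 2*t+2"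
  proof -
    let ?S = "{lee_dist n u v |u v. u \<in> W \<and> v \<in> W \<and> u \<noteq> v}"
    have "?S \<subseteq> (\<lambda>(u,v). lee_dist n u v) ` (W \<times> W)" by auto
    then have "finite ?S" using Wfin finite_subset by blast
    moreover have "lee_dist n (fW 0 1) (fW 0 0) \<in> ?S" using Wpair by blast
    then have "2*t+2 \<in> ?S" using Wpair by simp
    ultimately show ?thesis unfolding min_dist_def using Wdist by (intro Min_eqI) auto
  qed
  have diamA: "diam n A = 2*t+1"
  proof -
    let ?S = "{lee_dist n u v |u v. u \<in> A \<and> v \<in> A}"
    have "?S \<subseteq> (\<lambda>(u,v). lee_dist n u v) ` (A \<times> A)" by auto
    then have "finite ?S" using Afin finite_subset by blast
    moreover have "lee_dist n (yA (int t + 1) 0) (yA (- int t) 0) \<in> ?S" using Apair by blast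
    then have "2*t+1 \<in> ?S" using Apair by simp
    ultimately show ?thesis unfolding diam_def using Adist by (intro Max_eqI) auto
  qed
  have antiA: "is_anticode n 2 (2*t+1) A"
    unfolding is_anticode_def using Asub diamA Apair by auto
  have CA: "card W * card B \<le> n * n" if "is_anticode n 2 (2*t+1) B" for B
  proof -
    have Bs: "B \<subseteq> Zn_space n 2" and dB: "diam n B = 2*t+1" using that unfolding is_anticode_def by auto
    have Bfin: "finite B" using Bs finite_space finite_subset by blast
    let ?S = "{lee_dist n u v |u v. u \<in> B \<and> v \<in> B}"
    have "?S \<subseteq> (\<lambda>(u,v). lee_dist n u v) ` (B \<times> B)" by auto
    then have fS: "finite ?S" using Bfin finite_subset by blast
    have "\<forall>u\<in>B. \<forall>v\<in>B. lee_dist n u v \<le> 2*t+1"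
    proof (intro ballI)
      fix u v assume "u \<in> B" "v \<in> B"
      then have "lee_dist n u v \<in> ?S" by blast
      then have "lee_dist n u v \<le> Max ?S" by (rule Max_ge[OF fS])
      then show "lee_dist n u v \<le> 2*t+1" using dB unfolding diam_def by simp
    qed
    moreover have "\<forall>u\<in>W. \<forall>v\<in>W. u \<noteq> v \<longrightarrow> lee_dist n u v > 2*t+1" using Wdist by fastforce
    ultimately show ?thesis using code_anticode[OF n0 Wsub Bs] by blast
  qed
  have eqc: "card W * card A = n * n"
    using CA[OF antiA] mult_le_mono[OF Wcard Acard] by simp
  have maxA: "\<forall>B. is_anticode n 2 (2*t+1) B \<longrightarrow> card B \<le> card A"
  proof (intro allI impI)
    fix B assume "is_anticode n 2 (2*t+1) B"
    then have "card W * card B \<le> card W * card A" using CA eqc by simp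
    moreover have "card W > 0" using Wcard n0 by simp
    ultimately show "card B \<le> card A" by simp
  qed
  have "diameter_perfect n 2 (2*t+1) W A"
    unfolding diameter_perfect_def using Wsub mind antiA maxA eqc card_space by simp
  then show ?thesis using mind unfolding W_def A_def by simp
qed

end
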